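(* Fix a partition $\Pi$ of $V(G)$ into sets of sizes divisible by $r$. Suppose each $f_v$ is $K_v$-Lipschitz and let $K_{\max}=\max_vK_v$. If $\mathcal P$ is sampled uniformly from the set of partitions of $V(G)$ into $n$ sets of size $r$ each contained in a single part of $\Pi$, and $T=T_{\vec B,\mathcal P}$ with $\vec B$ independent of $\mathcal P$, then $$\mathbb E_{\mathcal P}\big|\mathbb E_{\vec B}(\xi\mid\mathcal P)\big|\le\frac{2K_{\max}|\Pi|}{rn}.$$
   Context: Let $n,p,q$ be positive integers, $r=p+q$, $G$ a finite simple graph with $|V(G)|=rn$ and no isolated vertices; $\mathcal N(v)$, $d(v)$ neighbor set and degree. For each $v$, $f_v:2^{\mathcal N(v)}\to\mathbb R$ with $f_v(\emptyset)=0$. $\sigma_T(v)=q$ if $v\in T$, $-p$ otherwise; for $|T|=pn$, $\xi=\frac1{pqn}\sum_v\sigma_T(v)f_v(T\cap\mathcal N(v))$. $f_v$ is $K_v$-Lipschitz ($K_v>0$) if $|f_v(A)-f_v(A')|\le K_v|A\triangle A'|/d(v)$ for all $A,A'\subseteq\mathcal N(v)$. Restricted randomization: for $\mathcal P=(S_1,\dots,S_n)$, $S_i=\{w_i^1,\dots,w_i^r\}$, $B_i$ i.i.d. uniform $p$-subsets of $\{1,\dots,r\}$, $T_{\vec B,\mathcal P}=\{w_i^j:j\in B_i\}$. *)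

theory Defs
  imports Complex_Main "HOL-Library.Disjoint_Sets" "HOL-Library.FuncSet"
begin

definition nbrs :: "('a \<Rightarrow> 'a \<Rightarrow> bool) \<Rightarrow> 'a set \<Rightarrow> 'a \<Rightarrow> 'a set" where
  "nbrs E V v = {u \<in> V. E v u}"

definition deg :: "('a \<Rightarrow> 'a \<Rightarrow> bool) \<Rightarrow> 'a set \<Rightarrow> 'a \<Rightarrow> nat" where
  "deg E V v = card (nbrs E V v)"

definition simple_graph_no_isolated :: "('a \<Rightarrow> 'a \<Rightarrow> bool) \<Rightarrow> 'a set \<Rightarrow> bool" where
  "simple_graph_no_isolated E V \<longleftrightarrow> finite V \<and>
     (\<forall>u\<in>V. \<forall>v\<in>V. E u v \<longleftrightarrow> E v u) \<and> (\<forall>v\<in>V. \<not> E v v) \<and>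
     (\<forall>v\<in>V. \<exists>u\<in>V. E v u)"

definition sigma :: "nat \<Rightarrow> nat \<Rightarrow> 'a set \<Rightarrow> 'a \<Rightarrow> real" where
  "sigma p q T v = (if v \<in> T then real q else - real p)"

definition xi :: "('a \<Rightarrow> 'a \<Rightarrow> bool) \<Rightarrow> 'a set \<Rightarrow> ('a \<Rightarrow> 'a set \<Rightarrow> real)
                   \<Rightarrow> nat \<Rightarrow> nat \<Rightarrow> nat \<Rightarrow> 'a set \<Rightarrow> real" where
  "xi E V f p q n T =
     (1 / (real p * real q * real n)) * (\<Sum>v\<in>V. sigma p q T v * f v (T \<inter> nbrs E V v))"

definition lipschitz_vertex :: "('a \<Rightarrow> 'a \<Rightarrow> bool) \<Rightarrow> 'a set \<Rightarrow> ('a \<Rightarrow> 'a set \<Rightarrow> real)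
                   \<Rightarrow> ('a \<Rightarrow> real) \<Rightarrow> 'a \<Rightarrow> bool" where
  "lipschitz_vertex E V f K v \<longleftrightarrow> K v > 0 \<and>
     (\<forall>A A'. A \<subseteq> nbrs E V v \<longrightarrow> A' \<subseteq> nbrs E V v \<longrightarrow>
        \<bar>f v A - f v A'\<bar> \<le> K v * real (card (sym_diff A A')) / real (deg E V v))"

definition is_partition :: "'a set \<Rightarrow> 'a set set \<Rightarrow> bool" where
  "is_partition V Parts \<longleftrightarrow> \<Union>Parts = V \<and> {} \<notin> Parts \<and> disjoint Parts"

definition restricted_partitions :: "'a set \<Rightarrow> 'a set set \<Rightarrow> nat \<Rightarrow> nat \<Rightarrow> 'a set set set" where
  "restricted_partitions V Parts r n =
     {P. is_partition V P \<and> card P = n \<and>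
         (\<forall>S\<in>P. card S = r \<and> (\<exists>A\<in>Parts. S \<subseteq> A))}"

text \<open>Conditional expectation over B given P: in every block S of P independently a uniformly
  random p-subset is chosen; T is the union of the chosen subsets (this is the law of T_{B,P}).\<close>
definition block_choices :: "'a set set \<Rightarrow> nat \<Rightarrow> ('a set \<Rightarrow> 'a set) set" where
  "block_choices P p = (\<Pi>\<^sub>E S\<in>P. {B. B \<subseteq> S \<and> card B = p})"

definition cond_exp_B :: "('a \<Rightarrow> 'a \<Rightarrow> bool) \<Rightarrow> 'a set \<Rightarrow> ('a \<Rightarrow> 'a set \<Rightarrow> real)
                   \<Rightarrow> nat \<Rightarrow> nat \<Rightarrow> nat \<Rightarrow> 'a set set \<Rightarrow> real" where
  "cond_exp_B E V f p q n P =
     (\<Sum>g\<in>block_choices P p. xi E V f p q n (\<Union>S\<in>P. g S)) / real (card (block_choices P p))"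

end

theory Submission
  imports Defs
begin


lemma bc_mem: "g \<in> block_choices P p \<longleftrightarrow> g \<in> extensional P \<and> (\<forall>S\<in>P. g S \<subseteq> S \<and> card (g S) = p)"
  unfolding block_choices_def PiE_def by auto

lemma bc_upd: "g \<in> block_choices P p \<Longrightarrow> S0 \<in> P \<Longrightarrow> X \<subseteq> S0 \<Longrightarrow> card X = p
   \<Longrightarrow> g(S0 := X) \<in> block_choices P p"
  unfolding bc_mem by (auto simp: extensional_def)

lemma bc_finite: "finite P \<Longrightarrow> \<forall>S\<in>P. finite S \<Longrightarrow> finite (block_choices P p)"
  unfolding block_choices_def by (intro finite_PiE) auto

lemma v_in_T:
  assumes "disjoint P" "S0 \<in> P" "v \<in> S0" "g \<in> block_choices P p"
  shows "v \<in> (\<Union>S\<in>P. g S) \<longleftrightarrow> v \<in> g S0"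
proof
  assume "v \<in> (\<Union>S\<in>P. g S)"
  then obtain S where S: "S \<in> P" "v \<in> g S" by auto
  have "g S \<subseteq> S" using assms(4) S(1) by (auto simp: bc_mem)
  hence "S = S0" using S assms(1,2,3) by (auto simp: disjoint_def)
  thus "v \<in> g S0" using S by simp
qed (use assms in auto)

lemma pairing:
  fixes P :: "'a set set" and F :: "('a set \<Rightarrow> 'a set) \<Rightarrow> real"
  assumes fin: "finite P" "\<forall>S\<in>P. finite S" and disj: "disjoint P"
    and S0: "S0 \<in> P" "v \<in> S0" "card S0 = p + q"
  shows "(\<Sum>g\<in>block_choices P p. sigma p q (\<Union>S\<in>P. g S) v * F g)
     = (\<Sum>(g,w)\<in>Sigma {g\<in>block_choices P p. v \<notin> g S0} (\<lambda>g. g S0).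
           F (g(S0 := insert v (g S0 - {w}))) - F g)"
proof -
  define C where "C = block_choices P p"
  define In where "In = {g\<in>C. v \<in> g S0}"
  define Out where "Out = {g\<in>C. v \<notin> g S0}"
  have finC: "finite C" using bc_finite fin C_def by blast
  have finS0: "finite S0" using fin S0 by auto
  have sub: "g \<in> C \<Longrightarrow> g S0 \<subseteq> S0 \<and> card (g S0) = p" for g
    using S0 by (auto simp: C_def bc_mem)
  have "(\<Sum>g\<in>C. sigma p q (\<Union>S\<in>P. g S) v * F g)
      = (\<Sum>g\<in>C. if v \<in> g S0 then real q * F g else - real p * F g)"
  proof (intro sum.cong refl)
    fix g assume "g \<in> C"
    hence "v \<in> (\<Union>S\<in>P. g S) \<longleftrightarrow> v \<in> g S0" using v_in_T[OF disj S0(1,2)] C_def by blast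
    thus "sigma p q (\<Union>S\<in>P. g S) v * F g = (if v \<in> g S0 then real q * F g else - real p * F g)"
      by (simp add: sigma_def)
  qed
  also have "\<dots> = (\<Sum>g\<in>In. real q * F g) + (\<Sum>g\<in>Out. - real p * F g)"
    by (simp add: sum.If_cases finC In_def Out_def) (intro arg_cong2[where f="(+)"] sum.cong; auto)
  finally have L: "(\<Sum>g\<in>C. sigma p q (\<Union>S\<in>P. g S) v * F g)
      = (\<Sum>g\<in>In. real q * F g) + (\<Sum>g\<in>Out. - real p * F g)" .
  have finOut: "finite Out" "finite In" using finC by (auto simp: Out_def In_def)
  have finB: "g \<in> Out \<Longrightarrow> finite (g S0)" for g using sub finS0 by (auto simp: Out_def intro: finite_subset)
  have R2: "(\<Sum>(g,w)\<in>Sigma Out (\<lambda>g. g S0). F g) = (\<Sum>g\<in>Out. real p * F g)"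
    by (subst sum.Sigma[symmetric]) (use finOut finB sub in \<open>auto simp: Out_def\<close>)
  have R1: "(\<Sum>(g,w)\<in>Sigma Out (\<lambda>g. g S0). F (g(S0 := insert v (g S0 - {w}))))
       = (\<Sum>(g,w)\<in>Sigma In (\<lambda>g. S0 - g S0). F g)"
  proof (rule sum.reindex_bij_witness[symmetric, where j="\<lambda>(g,w). (g(S0 := insert w (g S0 - {v})), w)"
        and i="\<lambda>(g,w). (g(S0 := insert v (g S0 - {w})), w)"])
    fix a assume a: "a \<in> Sigma Out (\<lambda>g. g S0)"
    then obtain g w where [simp]: "a = (g,w)" and g: "g \<in> C" "v \<notin> g S0" "w \<in> g S0"
      by (auto simp: Out_def)
    have e: "insert w (insert v (g S0 - {w}) - {v}) = g S0" using g by auto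
    show "(\<lambda>(g,w). (g(S0 := insert w (g S0 - {v})), w)) ((\<lambda>(g,w). (g(S0 := insert v (g S0 - {w})), w)) a) = a"
      using e by simp
    have fg: "finite (g S0)" using sub[OF g(1)] finS0 finite_subset by blast
    have "card (g S0) > 0" using fg g(3) card_gt_0_iff by blast
    hence "insert v (g S0 - {w}) \<subseteq> S0" "card (insert v (g S0 - {w})) = p"
      using sub[OF g(1)] g S0 fg by (auto simp: card_insert_if)
    hence "g(S0 := insert v (g S0 - {w})) \<in> C" using bc_upd g(1) S0(1) C_def by metis
    thus "(\<lambda>(g,w). (g(S0 := insert v (g S0 - {w})), w)) a \<in> Sigma In (\<lambda>g. S0 - g S0)"
      using g sub[OF g(1)] by (auto simp: In_def)
  next
    fix b assume b: "b \<in> Sigma In (\<lambda>g. S0 - g S0)"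
    then obtain g w where [simp]: "b = (g,w)" and g: "g \<in> C" "v \<in> g S0" "w \<in> S0" "w \<notin> g S0"
      by (auto simp: In_def)
    have e: "insert v (insert w (g S0 - {v}) - {w}) = g S0" using g by auto
    show "(\<lambda>(g,w). (g(S0 := insert v (g S0 - {w})), w)) ((\<lambda>(g,w). (g(S0 := insert w (g S0 - {v})), w)) b) = b"
      using e by simp
    have fg: "finite (g S0)" using sub[OF g(1)] finS0 finite_subset by blast
    have "card (g S0) > 0" using fg g(2) card_gt_0_iff by blast
    hence "insert w (g S0 - {v}) \<subseteq> S0" "card (insert w (g S0 - {v})) = p"
      using sub[OF g(1)] g S0 fg by (auto simp: card_insert_if)
    hence "g(S0 := insert w (g S0 - {v})) \<in> C" using bc_upd g(1) S0(1) C_def by metis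
    thus "(\<lambda>(g,w). (g(S0 := insert w (g S0 - {v})), w)) b \<in> Sigma Out (\<lambda>g. g S0)"
      using g by (auto simp: Out_def)
    show "(\<lambda>(g,w). F (g(S0 := insert v (g S0 - {w})))) ((\<lambda>(g,w). (g(S0 := insert w (g S0 - {v})), w)) b)
          = (\<lambda>(g,w). F g) b"
      using e by simp
  qed
  also have "\<dots> = (\<Sum>g\<in>In. real q * F g)"
  proof (subst sum.Sigma[symmetric])
    show "finite In" by fact
    show "\<forall>g\<in>In. finite (S0 - g S0)" using finS0 by auto
    show "(\<Sum>g\<in>In. \<Sum>w\<in>S0 - g S0. F g) = (\<Sum>g\<in>In. real q * F g)"
    proof (intro sum.cong refl)
      fix g assume "g \<in> In"
      hence gs: "g S0 \<subseteq> S0" "card (g S0) = p" using sub by (auto simp: In_def)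
      hence "card (S0 - g S0) = q" using S0 finS0 finite_subset[OF gs(1)] by (simp add: card_Diff_subset)
      thus "(\<Sum>w\<in>S0 - g S0. F g) = real q * F g" by simp
    qed
  qed
  finally have R1': "(\<Sum>(g,w)\<in>Sigma Out (\<lambda>g. g S0). F (g(S0 := insert v (g S0 - {w}))))
       = (\<Sum>g\<in>In. real q * F g)" .
  have "(\<Sum>(g,w)\<in>Sigma Out (\<lambda>g. g S0). F (g(S0 := insert v (g S0 - {w}))) - F g)
     = (\<Sum>(g,w)\<in>Sigma Out (\<lambda>g. g S0). F (g(S0 := insert v (g S0 - {w}))))
       - (\<Sum>(g,w)\<in>Sigma Out (\<lambda>g. g S0). F g)"
    by (simp add: case_prod_unfold sum_subtractf)
  also have "\<dots> = (\<Sum>g\<in>In. real q * F g) + (\<Sum>g\<in>Out. - real p * F g)"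
    unfolding R1' R2 by (simp add: sum_negf)
  finally show ?thesis unfolding L C_def[symmetric] Out_def[symmetric] by simp

qed

lemma binom_id:
  assumes "p > 0" "q > 0"
  shows "((p + q - 2) choose (p - 1)) * ((p + q) * (p + q - 1)) = ((p + q) choose p) * p * q"
proof -
  obtain a where a: "p = Suc a" using assms by (cases p) auto
  obtain b where b: "q = Suc b" using assms by (cases q) auto
  have e1: "Suc (Suc (a+b)) * (Suc (a+b) choose a) = (Suc (Suc (a+b)) choose Suc a) * Suc a"
    by (rule Suc_times_binomial_eq)
  have s1: "(Suc (a+b) choose a) = (Suc (a+b) choose Suc b)"
    by (subst binomial_symmetric) auto
  have e2: "Suc (a+b) * ((a+b) choose b) = (Suc (a+b) choose Suc b) * Suc b"
    by (rule Suc_times_binomial_eq)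
  have s2: "((a+b) choose b) = ((a+b) choose a)"
    by (subst binomial_symmetric) auto
  have "((a+b) choose a) * (Suc (Suc (a+b)) * Suc (a+b))
      = Suc (Suc (a+b)) * (Suc (a+b) * ((a+b) choose b))" unfolding s2 by (simp only: mult_ac)
  also have "\<dots> = Suc (Suc (a+b)) * (Suc (a+b) choose a) * Suc b" unfolding e2 s1 by (simp only: mult_ac)
  also have "\<dots> = (Suc (Suc (a+b)) choose Suc a) * Suc a * Suc b" unfolding e1 by (simp only: mult_ac)
  finally have "((a+b) choose a) * (Suc (Suc (a+b)) * Suc (a+b)) = (Suc (Suc (a+b)) choose Suc a) * Suc a * Suc b" .
  thus ?thesis using a b by (simp add: algebra_simps)
qed

lemma card_X:
  assumes "finite S0" "card S0 = r" "v \<in> S0" "w \<in> S0" "v \<noteq> w" "p > 0"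
  shows "card {B. B \<subseteq> S0 \<and> card B = p \<and> v \<notin> B \<and> w \<in> B} = (r - 2) choose (p - 1)"
proof -
  let ?Y = "{B. B \<subseteq> S0 - {v, w} \<and> card B = p - 1}"
  have "{B. B \<subseteq> S0 \<and> card B = p \<and> v \<notin> B \<and> w \<in> B} = insert w ` ?Y"
  proof (intro equalityI subsetI)
    fix B assume B: "B \<in> {B. B \<subseteq> S0 \<and> card B = p \<and> v \<notin> B \<and> w \<in> B}"
    have fB: "finite B" using B assms(1) finite_subset by blast
    have "B = insert w (B - {w})" using B by auto
    moreover have "B - {w} \<in> ?Y" using B fB by auto
    ultimately show "B \<in> insert w ` ?Y" by blast
  next
    fix B assume "B \<in> insert w ` ?Y"
    then obtain B' where B': "B' \<subseteq> S0 - {v, w}" "card B' = p - 1" "B = insert w B'" by auto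
    have "finite B'" using B'(1) assms(1) finite_subset by blast
    thus "B \<in> {B. B \<subseteq> S0 \<and> card B = p \<and> v \<notin> B \<and> w \<in> B}"
      using B' assms by (auto simp: card_insert_if)
  qed
  moreover have "inj_on (insert w) ?Y"
    by (rule inj_onI) (metis Diff_iff insertI1 insert_Diff1 insert_absorb insert_ident mem_Collect_eq subset_iff)
  moreover have "card ?Y = (r - 2) choose (p - 1)"
  proof -
    have "card (S0 - {v, w}) = r - 2" using assms by (simp add: card_Diff_subset)
    thus ?thesis using n_subsets[of "S0 - {v,w}" "p - 1"] assms(1) by simp
  qed
  ultimately show ?thesis by (simp add: card_image)
qed


lemma count_out:
  assumes fin: "finite P" "\<forall>S\<in>P. finite S \<and> card S = p + q"
    and S0: "S0 \<in> P" "v \<in> S0" "w \<in> S0" "v \<noteq> w" and pq: "p > 0" "q > 0"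
  shows "real (card {g\<in>block_choices P p. v \<notin> g S0 \<and> w \<in> g S0}) * (real (p+q) * real (p+q-1))
       = real (card (block_choices P p)) * real p * real q"
proof -
  define G where "G (S::'a set) = {B. B \<subseteq> S \<and> card B = p}" for S
  define X where "X = {B. B \<subseteq> S0 \<and> card B = p \<and> v \<notin> B \<and> w \<in> B}"
  define G' where "G' (S::'a set) = (if S = S0 then X else G S)" for S
  have e: "{g\<in>block_choices P p. v \<notin> g S0 \<and> w \<in> g S0} = PiE P G'"
  proof (intro set_eqI iffI)
    fix g assume "g \<in> {g\<in>block_choices P p. v \<notin> g S0 \<and> w \<in> g S0}"
    thus "g \<in> PiE P G'" unfolding block_choices_def PiE_iff G'_def G_def X_def by auto
  next
    fix g assume g: "g \<in> PiE P G'"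
    hence "g S0 \<in> X" using S0(1) unfolding PiE_iff G'_def by auto
    moreover have "g \<in> block_choices P p" using g unfolding block_choices_def PiE_iff G'_def G_def X_def
      by (auto split: if_splits)
    ultimately show "g \<in> {g\<in>block_choices P p. v \<notin> g S0 \<and> w \<in> g S0}" by (auto simp: X_def)
  qed
  define R where "R = (\<Prod>S\<in>P - {S0}. card (G S))"
  have c1: "card (PiE P G') = card X * R"
    unfolding card_PiE[OF fin(1)] R_def
    by (subst prod.remove[OF fin(1) S0(1)]) (auto simp: G'_def intro!: prod.cong)
  have c2: "card (block_choices P p) = ((p+q) choose p) * R"
  proof -
    have "block_choices P p = PiE P G" unfolding block_choices_def G_def by simp
    hence "card (block_choices P p) = (\<Prod>S\<in>P. card (G S))" using card_PiE[OF fin(1)] by simp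
    also have "\<dots> = card (G S0) * R" unfolding R_def by (rule prod.remove[OF fin(1) S0(1)])
    also have "card (G S0) = (p+q) choose p" unfolding G_def using fin S0 n_subsets by metis
    finally show ?thesis .
  qed
  have cX: "card X = (p + q - 2) choose (p - 1)"
    unfolding X_def by (rule card_X) (use fin S0 pq in auto)
  have "card {g\<in>block_choices P p. v \<notin> g S0 \<and> w \<in> g S0} * ((p+q) * (p+q-1))
      = card (block_choices P p) * p * q"
  proof -
    have "card X * R * ((p+q)*(p+q-1)) = (card X * ((p+q)*(p+q-1))) * R" by (simp only: mult_ac)
    also have "\<dots> = (((p+q) choose p) * p * q) * R" by (simp only: cX binom_id[OF pq])
    also have "\<dots> = ((p+q) choose p) * R * p * q" by (simp only: mult_ac)
    finally show ?thesis unfolding e c1 c2 .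
  qed
  hence "real (card {g\<in>block_choices P p. v \<notin> g S0 \<and> w \<in> g S0} * ((p+q) * (p+q-1)))
      = real (card (block_choices P p) * p * q)" by (rule arg_cong)
  thus ?thesis by (simp only: of_nat_mult)
qed


lemma diff_bound:
  assumes disj: "disjoint P" and S0: "S0 \<in> P" "v \<in> S0"
    and g: "g \<in> block_choices P p" "v \<notin> g S0" "w \<in> g S0"
    and lip: "lipschitz_vertex E V f K v" and vN: "v \<notin> nbrs E V v" and dpos: "deg E V v > 0"
  shows "\<bar>f v ((\<Union>S\<in>P. (g(S0 := insert v (g S0 - {w}))) S) \<inter> nbrs E V v)
           - f v ((\<Union>S\<in>P. g S) \<inter> nbrs E V v)\<bar>
         \<le> K v / real (deg E V v) * (if w \<in> nbrs E V v then 1 else 0)"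
proof -
  let ?N = "nbrs E V v"
  let ?T = "\<Union>S\<in>P. g S"
  let ?T' = "\<Union>S\<in>P. (g(S0 := insert v (g S0 - {w}))) S"
  have gsub: "S \<in> P \<Longrightarrow> g S \<subseteq> S" for S using g(1) by (auto simp: bc_mem)
  have a1: "?T' - ?T \<subseteq> {v}" using S0 by auto
  have a2: "?T - ?T' \<subseteq> {w}"
  proof
    fix x assume x: "x \<in> ?T - ?T'"
    then obtain S where S: "S \<in> P" "x \<in> g S" by auto
    show "x \<in> {w}"
    proof (cases "S = S0")
      case True thus ?thesis using x S S0 by auto
    next
      case False thus ?thesis using x S by (auto split: if_splits)
    qed
  qed
  have sd: "sym_diff (?T' \<inter> ?N) (?T \<inter> ?N) \<subseteq> {w} \<inter> ?N" using a1 a2 vN by blast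
  have cd: "real (card (sym_diff (?T' \<inter> ?N) (?T \<inter> ?N))) \<le> (if w \<in> ?N then 1 else 0)"
  proof -
    have "card (sym_diff (?T' \<inter> ?N) (?T \<inter> ?N)) \<le> card ({w} \<inter> ?N)"
      by (rule card_mono[OF _ sd]) auto
    thus ?thesis by (auto split: if_splits)
  qed
  define c where "c = real (card (sym_diff (?T' \<inter> ?N) (?T \<inter> ?N)))"
  define ind where "ind = (if w \<in> ?N then 1 else (0::real))"
  define d where "d = real (deg E V v)"
  have Kp: "K v > 0" using lip unfolding lipschitz_vertex_def by blast
  have l1: "\<bar>f v (?T' \<inter> ?N) - f v (?T \<inter> ?N)\<bar> \<le> K v * c / d"
    using lip unfolding lipschitz_vertex_def c_def d_def by blast
  have "K v * c / d \<le> K v * ind / d"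
    using Kp cd dpos unfolding c_def ind_def d_def by (intro divide_right_mono mult_left_mono) auto
  also have "K v * ind / d = K v / d * ind" by simp
  finally show ?thesis using l1 unfolding ind_def d_def by linarith
qed



lemma sum_ind: "finite A \<Longrightarrow> (\<Sum>w\<in>A. if w \<in> N then (1::real) else 0) = real (card (A \<inter> N))"
  by (simp add: sum.If_cases)

lemma per_v:
  assumes fin: "finite P" "\<forall>S\<in>P. finite S \<and> card S = p + q" and disj: "disjoint P"
    and S0: "S0 \<in> P" "v \<in> S0" and pq: "p > 0" "q > 0"
    and lip: "lipschitz_vertex E V f K v" and vN: "v \<notin> nbrs E V v" and dpos: "deg E V v > 0"
  shows "\<bar>\<Sum>g\<in>block_choices P p. sigma p q (\<Union>S\<in>P. g S) v * f v ((\<Union>S\<in>P. g S) \<inter> nbrs E V v)\<bar>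
     \<le> K v / real (deg E V v) * (real (card (block_choices P p)) * real p * real q
          * real (card (S0 \<inter> nbrs E V v)) / (real (p+q) * real (p+q-1)))"
proof -
  let ?N = "nbrs E V v"
  define F where "F g = f v ((\<Union>S\<in>P. g S) \<inter> ?N)" for g
  define C where "C = block_choices P p"
  define Out where "Out = {g\<in>C. v \<notin> g S0}"
  define L where "L = K v / real (deg E V v)"
  define M where "M = real (card C) * real p * real q / (real (p+q) * real (p+q-1))"
  have finC: "finite C" using bc_finite fin C_def by auto
  have finOut: "finite Out" using finC Out_def by auto
  have finS0: "finite S0" using fin S0 by auto
  have gsub: "g \<in> C \<Longrightarrow> g S0 \<subseteq> S0" for g using S0 by (auto simp: C_def bc_mem)
  have finB: "g \<in> C \<Longrightarrow> finite (g S0)" for g using gsub finS0 finite_subset by blast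
  have Lnn: "L \<ge> 0" using lip unfolding L_def lipschitz_vertex_def by auto
  have eq: "(\<Sum>g\<in>C. sigma p q (\<Union>S\<in>P. g S) v * F g)
     = (\<Sum>(g,w)\<in>Sigma Out (\<lambda>g. g S0). F (g(S0 := insert v (g S0 - {w}))) - F g)"
    unfolding C_def Out_def by (rule pairing) (use fin disj S0 in auto)
  have "\<bar>\<Sum>(g,w)\<in>Sigma Out (\<lambda>g. g S0). F (g(S0 := insert v (g S0 - {w}))) - F g\<bar>
      \<le> (\<Sum>(g,w)\<in>Sigma Out (\<lambda>g. g S0). \<bar>F (g(S0 := insert v (g S0 - {w}))) - F g\<bar>)"
    by (rule order_trans[OF sum_abs]) (simp add: case_prod_unfold)
  also have "\<dots> \<le> (\<Sum>(g,w)\<in>Sigma Out (\<lambda>g. g S0). L * (if w \<in> ?N then 1 else 0))"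
  proof (rule sum_mono)
    fix x assume "x \<in> Sigma Out (\<lambda>g. g S0)"
    then obtain g w where x: "x = (g,w)" "g \<in> C" "v \<notin> g S0" "w \<in> g S0" by (auto simp: Out_def)
    show "(case x of (g,w) \<Rightarrow> \<bar>F (g(S0 := insert v (g S0 - {w}))) - F g\<bar>)
        \<le> (case x of (g,w) \<Rightarrow> L * (if w \<in> ?N then 1 else 0))"
      using diff_bound[OF disj S0 x(2)[unfolded C_def] x(3,4) lip vN dpos] x(1)
      unfolding F_def L_def by simp
  qed
  also have "\<dots> = L * (\<Sum>g\<in>Out. \<Sum>w\<in>g S0. if w \<in> ?N then 1 else 0)"
    by (subst sum.Sigma[symmetric]) (use finOut finB in \<open>auto simp: Out_def sum_distrib_left\<close>)
  also have "(\<Sum>g\<in>Out. \<Sum>w\<in>g S0. if w \<in> ?N then 1 else 0) = (\<Sum>g\<in>Out. \<Sum>w\<in>S0 \<inter> ?N. if w \<in> g S0 then (1::real) else 0)"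
  proof (rule sum.cong[OF refl])
    fix g assume g: "g \<in> Out"
    have fgs: "finite (g S0)" using finB g Out_def by auto
    have se: "g S0 \<inter> ?N = (S0 \<inter> ?N) \<inter> g S0" using gsub g Out_def by auto
    have "(\<Sum>w\<in>g S0. if w \<in> ?N then 1 else 0) = real (card (g S0 \<inter> ?N))" using fgs by (rule sum_ind)
    also have "\<dots> = real (card ((S0 \<inter> ?N) \<inter> g S0))" by (simp only: se)
    also have "\<dots> = (\<Sum>w\<in>S0 \<inter> ?N. if w \<in> g S0 then 1 else 0)"
      using finS0 by (simp add: sum_ind)
    finally show "(\<Sum>w\<in>g S0. if w \<in> ?N then 1 else 0) = (\<Sum>w\<in>S0 \<inter> ?N. if w \<in> g S0 then (1::real) else 0)" .
  qed
  also have "\<dots> = (\<Sum>w\<in>S0 \<inter> ?N. \<Sum>g\<in>Out. if w \<in> g S0 then (1::real) else 0)"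
    by (rule sum.swap)
  also have "\<dots> = (\<Sum>w\<in>S0 \<inter> ?N. M)"
  proof (rule sum.cong[OF refl])
    fix w assume w: "w \<in> S0 \<inter> ?N"
    have "(\<Sum>g\<in>Out. if w \<in> g S0 then (1::real) else 0) = real (card (Out \<inter> {g. w \<in> g S0}))"
      using finOut by (simp add: sum.If_cases)
    also have "Out \<inter> {g. w \<in> g S0} = {g\<in>block_choices P p. v \<notin> g S0 \<and> w \<in> g S0}"
      unfolding Out_def C_def by auto
    also have "real (card \<dots>) = M"
    proof -
      have wv: "w \<noteq> v" using w vN by auto
      have pos: "real (p+q) * real (p+q-1) > 0" using pq by auto
      have "real (card {g\<in>block_choices P p. v \<notin> g S0 \<and> w \<in> g S0}) * (real (p+q) * real (p+q-1))
          = real (card (block_choices P p)) * real p * real q"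
        by (rule count_out) (use fin S0 w wv pq in auto)
      moreover have "\<And>x y D::real. D > 0 \<Longrightarrow> x * D = y \<Longrightarrow> x = y / D" by (simp add: eq_divide_eq)
      ultimately show ?thesis unfolding M_def C_def using pos by blast
    qed
    finally show "(\<Sum>g\<in>Out. if w \<in> g S0 then (1::real) else 0) = M" .
  qed
  also have "(\<Sum>w\<in>S0 \<inter> ?N. M) = real (card (S0 \<inter> ?N)) * M" by simp
  finally have "\<bar>\<Sum>g\<in>C. sigma p q (\<Union>S\<in>P. g S) v * F g\<bar> \<le> L * (real (card (S0 \<inter> ?N)) * M)"
    unfolding eq .
  thus ?thesis unfolding F_def C_def L_def M_def by (simp add: mult_ac)
qed



definition blk :: "'a set set \<Rightarrow> 'a \<Rightarrow> 'a set" where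
  "blk P v = \<Union>{S\<in>P. v \<in> S}"

lemma part_block:
  assumes "is_partition V P" "v \<in> V"
  shows "\<exists>S0\<in>P. v \<in> S0 \<and> blk P v = S0"
proof -
  obtain S0 where S0: "S0 \<in> P" "v \<in> S0" using assms unfolding is_partition_def by auto
  have dj: "disjoint P" using assms(1) unfolding is_partition_def by auto
  have uniq: "S \<in> P \<Longrightarrow> v \<in> S \<Longrightarrow> S = S0" for S
  proof (rule ccontr)
    assume "S \<in> P" "v \<in> S" "S \<noteq> S0"
    hence "S \<inter> S0 = {}" using dj S0(1) disjointD by blast
    thus False using \<open>v \<in> S\<close> S0(2) by auto
  qed
  have "{S\<in>P. v \<in> S} = {S0}" using uniq S0 by blast
  hence "blk P v = S0" unfolding blk_def by simp
  thus ?thesis using S0 by blast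
qed

lemma graph_facts:
  assumes "simple_graph_no_isolated E V" "v \<in> V"
  shows "v \<notin> nbrs E V v" "deg E V v > 0" "finite V"
proof -
  show "finite V" using assms unfolding simple_graph_no_isolated_def by auto
  show "v \<notin> nbrs E V v" using assms unfolding simple_graph_no_isolated_def nbrs_def by auto
  obtain u where "u \<in> V" "E v u" using assms unfolding simple_graph_no_isolated_def by auto
  hence "u \<in> nbrs E V v" by (simp add: nbrs_def)
  moreover have "finite (nbrs E V v)" using \<open>finite V\<close> by (simp add: nbrs_def)
  ultimately show "deg E V v > 0" unfolding deg_def by (auto simp: card_gt_0_iff)
qed

lemma part_finite:
  assumes "is_partition V P" "finite V"
  shows "finite P" "\<forall>S\<in>P. finite S"
proof -
  have "P \<subseteq> Pow V" using assms unfolding is_partition_def by auto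
  moreover have "finite (Pow V)" using assms(2) by simp
  ultimately show "finite P" by (rule finite_subset)
  show "\<forall>S\<in>P. finite S"
  proof
    fix S assume "S \<in> P"
    hence "S \<subseteq> V" using \<open>P \<subseteq> Pow V\<close> by auto
    thus "finite S" using assms(2) by (rule finite_subset)
  qed
qed

lemma card_bc_pos:
  assumes "finite P" "\<forall>S\<in>P. finite S \<and> card S = p + q"
  shows "card (block_choices P p) > 0"
proof -
  have "card (block_choices P p) = (\<Prod>S\<in>P. card {B. B \<subseteq> S \<and> card B = p})"
    unfolding block_choices_def by (rule card_PiE[OF assms(1)])
  also have "\<dots> > 0"
  proof (rule prod_pos)
    fix S assume "S \<in> P"
    hence "card {B. B \<subseteq> S \<and> card B = p} = (p+q) choose p" using assms n_subsets by metis
    thus "card {B. B \<subseteq> S \<and> card B = p} > 0" by simp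
  qed
  finally show ?thesis .
qed

lemma per_P:
  assumes graph: "simple_graph_no_isolated E V" and lips: "\<forall>v\<in>V. lipschitz_vertex E V f K v"
    and part: "is_partition V P" and cards: "\<forall>S\<in>P. card S = p + q"
    and pq: "p > 0" "q > 0" and n: "n > 0"
  shows "\<bar>cond_exp_B E V f p q n P\<bar>
     \<le> (\<Sum>v\<in>V. K v / real (deg E V v) * real (card (blk P v \<inter> nbrs E V v)))
         / (real n * (real (p+q) * real (p+q-1)))"
proof (cases "V = {}")
  case True
  hence "P = {}" using part unfolding is_partition_def by auto
  thus ?thesis using True unfolding cond_exp_B_def xi_def by simp
next
  case False
  then obtain v0 where "v0 \<in> V" by auto
  hence finV: "finite V" using graph_facts[OF graph] by blast
  have finP: "finite P" "\<forall>S\<in>P. finite S" using part_finite[OF part finV] by auto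
  have disj: "disjoint P" using part unfolding is_partition_def by auto
  have fin2: "\<forall>S\<in>P. finite S \<and> card S = p + q" using finP cards by auto
  define C where "C = block_choices P p"
  define cC where "cC = real (card C)"
  define R where "R = real (p+q) * real (p+q-1)"
  define W where "W v = K v / real (deg E V v) * real (card (blk P v \<inter> nbrs E V v))" for v
  define T where "T g = (\<Union>S\<in>P. g S)" for g :: "'a set \<Rightarrow> 'a set"
  have cCpos: "cC > 0" unfolding cC_def C_def using card_bc_pos[OF finP(1) fin2] by simp
  have Rpos: "R > 0" unfolding R_def using pq by simp
  have sw: "(\<Sum>g\<in>C. xi E V f p q n (T g))
      = (1 / (real p * real q * real n)) * (\<Sum>v\<in>V. \<Sum>g\<in>C. sigma p q (T g) v * f v (T g \<inter> nbrs E V v))"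
    unfolding xi_def sum_distrib_left[symmetric] by (simp only: sum.swap[of _ C V])
  have bound_v: "\<bar>\<Sum>g\<in>C. sigma p q (T g) v * f v (T g \<inter> nbrs E V v)\<bar> \<le> (cC * real p * real q / R) * W v"
    if v: "v \<in> V" for v
  proof -
    obtain S0 where S0: "S0 \<in> P" "v \<in> S0" "blk P v = S0" using part_block[OF part v] by blast
    have "\<bar>\<Sum>g\<in>C. sigma p q (T g) v * f v (T g \<inter> nbrs E V v)\<bar>
       \<le> K v / real (deg E V v) * (cC * real p * real q * real (card (S0 \<inter> nbrs E V v)) / R)"
      unfolding T_def C_def cC_def R_def
      by (rule per_v[OF finP(1) fin2 disj S0(1,2) pq]) (use lips v graph_facts[OF graph v] in auto)
    also have "\<dots> = (cC * real p * real q / R) * W v" unfolding W_def S0(3) by (simp add: mult_ac)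
    finally show ?thesis .
  qed
  have "\<bar>\<Sum>g\<in>C. xi E V f p q n (T g)\<bar>
      \<le> (1 / (real p * real q * real n)) * (\<Sum>v\<in>V. \<bar>\<Sum>g\<in>C. sigma p q (T g) v * f v (T g \<inter> nbrs E V v)\<bar>)"
  proof -
    have ab: "\<bar>1 / (real p * real q * real n)\<bar> = 1 / (real p * real q * real n)" using pq n by simp
    show ?thesis unfolding sw abs_mult ab by (intro mult_left_mono sum_abs) (use pq n in auto)
  qed
  also have "\<dots> \<le> (1 / (real p * real q * real n)) * (\<Sum>v\<in>V. (cC * real p * real q / R) * W v)"
    by (intro mult_left_mono sum_mono bound_v) (use pq n in auto)
  also have "\<dots> = cC * ((\<Sum>v\<in>V. W v) / (real n * R))"
    unfolding sum_distrib_left[symmetric] using pq n Rpos by (simp add: field_simps)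
  finally have main: "\<bar>\<Sum>g\<in>C. xi E V f p q n (T g)\<bar> \<le> cC * ((\<Sum>v\<in>V. W v) / (real n * R))" .
  have "\<bar>cond_exp_B E V f p q n P\<bar> = \<bar>\<Sum>g\<in>C. xi E V f p q n (T g)\<bar> / cC"
    unfolding cond_exp_B_def C_def[symmetric] cC_def[symmetric] T_def using cCpos by simp
  also have "\<dots> \<le> cC * ((\<Sum>v\<in>V. W v) / (real n * R)) / cC"
    by (rule divide_right_mono[OF main]) (use cCpos in simp)
  also have "\<dots> = (\<Sum>v\<in>V. W v) / (real n * R)" using cCpos by simp
  finally have "\<bar>cond_exp_B E V f p q n P\<bar> \<le> (\<Sum>v\<in>V. W v) / (real n * R)" .
  thus ?thesis by (simp only: W_def R_def)
qed



definition tr :: "'a \<Rightarrow> 'a \<Rightarrow> 'a \<Rightarrow> 'a" where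
  "tr u u' x = (if x = u then u' else if x = u' then u else x)"

definition mapP :: "'a \<Rightarrow> 'a \<Rightarrow> 'a set set \<Rightarrow> 'a set set" where
  "mapP u u' P = (\<lambda>S. tr u u' ` S) ` P"

lemma tr_tr[simp]: "tr u u' (tr u u' x) = x"
  unfolding tr_def by auto

lemma inj_tr: "inj (tr u u')"
  by (metis injI tr_tr)

lemma tr_img_img[simp]: "tr u u' ` (tr u u' ` S) = S"
  by (simp add: image_comp comp_def)

lemma mapP_mapP[simp]: "mapP u u' (mapP u u' P) = P"
  unfolding mapP_def by (simp add: image_comp comp_def)

lemma inv_card:
  assumes "finite X" "finite Y" "m ` X \<subseteq> Y" "m ` Y \<subseteq> X" "\<And>x. m (m x) = x"
  shows "card X = card Y"
proof -
  have inj: "inj m" by (metis injI assms(5))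
  have "card X = card (m ` X)" using inj by (simp add: card_image inj_on_subset)
  also have "\<dots> \<le> card Y" using assms(2,3) by (rule card_mono)
  finally have 1: "card X \<le> card Y" .
  have "card Y = card (m ` Y)" using inj by (simp add: card_image inj_on_subset)
  also have "\<dots> \<le> card X" using assms(1,4) by (rule card_mono)
  finally show ?thesis using 1 by simp
qed

lemma mapP_RP:
  assumes parts: "is_partition V Parts" and A: "A \<in> Parts" "u \<in> A" "u' \<in> A"
    and P: "P \<in> restricted_partitions V Parts r n"
  shows "mapP u u' P \<in> restricted_partitions V Parts r n"
proof -
  let ?t = "tr u u'"
  have pP: "is_partition V P" "card P = n" "\<forall>S\<in>P. card S = r \<and> (\<exists>A\<in>Parts. S \<subseteq> A)"
    using P unfolding restricted_partitions_def by auto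
  have AV: "A \<subseteq> V" using parts A(1) unfolding is_partition_def by auto
  have tV: "?t ` V = V"
  proof
    show "?t ` V \<subseteq> V" using AV A unfolding tr_def by auto
    hence "?t ` (?t ` V) \<subseteq> ?t ` V" by (rule image_mono)
    thus "V \<subseteq> ?t ` V" by simp
  qed
  have inj: "inj ?t" by (rule inj_tr)
  have injS: "inj_on ((`) ?t) X" for X
    by (rule inj_onI) (metis tr_img_img)
  have U: "\<Union>(mapP u u' P) = V"
    unfolding mapP_def using pP(1) tV unfolding is_partition_def by (simp add: image_Union[symmetric])
  have E: "{} \<notin> mapP u u' P" using pP(1) unfolding mapP_def is_partition_def by auto
  have D: "disjoint (mapP u u' P)"
  proof (rule disjointI)
    fix a b assume ab: "a \<in> mapP u u' P" "b \<in> mapP u u' P" "a \<noteq> b"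
    then obtain S1 S2 where S: "S1 \<in> P" "S2 \<in> P" "a = ?t ` S1" "b = ?t ` S2" unfolding mapP_def by auto
    hence "S1 \<noteq> S2" using ab by auto
    hence "S1 \<inter> S2 = {}" using pP(1) S disjointD unfolding is_partition_def by blast
    thus "a \<inter> b = {}" using S inj by (simp add: image_Int[symmetric])
  qed
  have C: "card (mapP u u' P) = n" unfolding mapP_def using pP(2) injS by (simp add: card_image)
  have B: "\<forall>S'\<in>mapP u u' P. card S' = r \<and> (\<exists>A'\<in>Parts. S' \<subseteq> A')"
  proof
    fix S' assume "S' \<in> mapP u u' P"
    then obtain S where S: "S \<in> P" "S' = ?t ` S" unfolding mapP_def by auto
    obtain A' where A': "A' \<in> Parts" "S \<subseteq> A'" using pP(3) S(1) by auto
    have cS: "card S' = r" using S pP(3) inj by (simp add: card_image inj_on_subset)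
    have "?t ` S \<subseteq> A'"
    proof
      fix y assume "y \<in> ?t ` S"
      then obtain x where x: "x \<in> S" "y = ?t x" by auto
      show "y \<in> A'"
      proof (cases "x = u \<or> x = u'")
        case True
        hence "x \<in> A \<inter> A'" using x A' A by auto
        hence "A' = A" using parts A'(1) A(1) disjointD unfolding is_partition_def by blast
        thus ?thesis using x A True unfolding tr_def by auto
      next
        case False thus ?thesis using x A' unfolding tr_def by auto
      qed
    qed
    thus "card S' = r \<and> (\<exists>A'\<in>Parts. S' \<subseteq> A')" using cS A'(1) S(2) by blast
  qed
  show ?thesis unfolding restricted_partitions_def is_partition_def using U E D C B by blast
qed

lemma blk_mapP:
  assumes "u \<in> blk P v" "v \<noteq> u" "v \<noteq> u'"
  shows "u' \<in> blk (mapP u u' P) v"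
proof -
  obtain S where S: "S \<in> P" "v \<in> S" "u \<in> S" using assms(1) unfolding blk_def by auto
  have "tr u u' ` S \<in> mapP u u' P" using S(1) unfolding mapP_def by auto
  moreover have "v \<in> tr u u' ` S" using S(2) assms(2,3) unfolding tr_def by (auto intro: image_eqI[of v _ v])
  moreover have "u' \<in> tr u u' ` S" using S(3) unfolding tr_def by (auto intro: image_eqI[of u' _ u])
  ultimately show ?thesis unfolding blk_def by auto
qed

lemma tr_sym: "tr u u' = tr u' u"
  unfolding tr_def by auto

lemma RP_finite:
  assumes "finite V"
  shows "finite (restricted_partitions V Parts r n)"
proof -
  have "restricted_partitions V Parts r n \<subseteq> Pow (Pow V)"
    unfolding restricted_partitions_def is_partition_def by auto
  moreover have "finite (Pow (Pow V))" using assms by simp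
  ultimately show ?thesis by (rule finite_subset)
qed

lemma sym_count:
  assumes parts: "is_partition V Parts" and A: "A \<in> Parts" "u \<in> A" "u' \<in> A" "v \<noteq> u" "v \<noteq> u'"
    and finV: "finite V"
  shows "card {P\<in>restricted_partitions V Parts r n. u \<in> blk P v}
       = card {P\<in>restricted_partitions V Parts r n. u' \<in> blk P v}"
proof (rule inv_card[where m="mapP u u'"])
  let ?RP = "restricted_partitions V Parts r n"
  show "finite {P\<in>?RP. u \<in> blk P v}" "finite {P\<in>?RP. u' \<in> blk P v}"
    using RP_finite[OF finV] by auto
  show "mapP u u' ` {P\<in>?RP. u \<in> blk P v} \<subseteq> {P\<in>?RP. u' \<in> blk P v}"
    using mapP_RP[OF parts A(1,2,3)] blk_mapP A(4,5) by auto
  have "mapP u' u ` {P\<in>?RP. u' \<in> blk P v} \<subseteq> {P\<in>?RP. u \<in> blk P v}"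
    using mapP_RP[OF parts A(1,3,2)] blk_mapP A(4,5) by auto
  moreover have "mapP u' u = mapP u u'" unfolding mapP_def tr_sym[of u' u] ..
  ultimately show "mapP u u' ` {P\<in>?RP. u' \<in> blk P v} \<subseteq> {P\<in>?RP. u \<in> blk P v}" by simp
qed simp



lemma card_filter_sum: "finite X \<Longrightarrow> card {x\<in>X. Q x} = (\<Sum>x\<in>X. if Q x then 1 else (0::nat))"
  by (simp add: sum.If_cases Int_def conj_commute)

lemma blk_in_part:
  assumes parts: "is_partition V Parts" and A: "A \<in> Parts" "v \<in> A"
    and P: "P \<in> restricted_partitions V Parts r n"
  shows "blk P v \<subseteq> A" "v \<in> blk P v" "card (blk P v) = r"
proof -
  have pP: "is_partition V P" "\<forall>S\<in>P. card S = r \<and> (\<exists>A\<in>Parts. S \<subseteq> A)"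
    using P unfolding restricted_partitions_def by auto
  have vV: "v \<in> V" using parts A unfolding is_partition_def by auto
  obtain S0 where S0: "S0 \<in> P" "v \<in> S0" "blk P v = S0" using part_block[OF pP(1) vV] by blast
  obtain A' where A': "A' \<in> Parts" "S0 \<subseteq> A'" using pP(2) S0(1) by auto
  have "v \<in> A \<inter> A'" using A S0 A' by auto
  hence "A' = A" using parts A'(1) A(1) disjointD unfolding is_partition_def by blast
  thus "blk P v \<subseteq> A" using A' S0 by simp
  show "v \<in> blk P v" using S0 by simp
  show "card (blk P v) = r" using S0 pP(2) by simp
qed

lemma count_total:
  assumes parts: "is_partition V Parts" and A: "A \<in> Parts" "v \<in> A" and finV: "finite V"
  shows "(\<Sum>u\<in>A-{v}. card {P\<in>restricted_partitions V Parts r n. u \<in> blk P v})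
       = card (restricted_partitions V Parts r n) * (r - 1)"
proof -
  let ?RP = "restricted_partitions V Parts r n"
  have finRP: "finite ?RP" by (rule RP_finite[OF finV])
  have AV: "A \<subseteq> V" using parts A unfolding is_partition_def by auto
  have finA: "finite (A - {v})" using finite_subset[OF AV finV] by simp
  have "(\<Sum>u\<in>A-{v}. card {P\<in>?RP. u \<in> blk P v})
      = (\<Sum>u\<in>A-{v}. \<Sum>P\<in>?RP. if u \<in> blk P v then 1 else 0)"
    using finRP by (simp add: card_filter_sum)
  also have "\<dots> = (\<Sum>P\<in>?RP. \<Sum>u\<in>A-{v}. if u \<in> blk P v then 1 else 0)" by (rule sum.swap)
  also have "\<dots> = (\<Sum>P\<in>?RP. r - 1)"
  proof (rule sum.cong[OF refl])
    fix P assume P: "P \<in> ?RP"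
    note b = blk_in_part[OF parts A P]
    have fAA: "finite A" using finite_subset[OF AV finV] .
    have fb: "finite (blk P v)" using finite_subset[OF b(1) fAA] .
    have "(\<Sum>u\<in>A-{v}. if u \<in> blk P v then 1 else (0::nat)) = card {u\<in>A-{v}. u \<in> blk P v}"
      by (rule card_filter_sum[OF finA, symmetric])
    also have "{u\<in>A-{v}. u \<in> blk P v} = blk P v - {v}" using b(1) by auto
    also have "card (blk P v - {v}) = r - 1" using b(2,3) fb by simp
    finally show "(\<Sum>u\<in>A-{v}. if u \<in> blk P v then 1 else (0::nat)) = r - 1" .
  qed
  also have "\<dots> = card ?RP * (r - 1)" by simp
  finally show ?thesis .
qed

lemma count_each:
  assumes parts: "is_partition V Parts" and A: "A \<in> Parts" "v \<in> A" "u \<in> A" "u \<noteq> v"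
    and finV: "finite V"
  shows "card {P\<in>restricted_partitions V Parts r n. u \<in> blk P v} * (card A - 1)
       = card (restricted_partitions V Parts r n) * (r - 1)"
proof -
  let ?c = "\<lambda>u. card {P\<in>restricted_partitions V Parts r n. u \<in> blk P v}"
  have AV: "A \<subseteq> V" using parts A unfolding is_partition_def by auto
  have finA: "finite A" using finite_subset[OF AV finV] .
  have "\<forall>u'\<in>A-{v}. ?c u' = ?c u"
  proof
    fix u' assume u': "u' \<in> A - {v}"
    show "?c u' = ?c u"
      by (rule sym_count[OF parts A(1)]) (use u' A finV in auto)
  qed
  hence "(\<Sum>u'\<in>A-{v}. ?c u') = (\<Sum>u'\<in>A-{v}. ?c u)" by (intro sum.cong[OF refl]) blast
  also have "\<dots> = card (A - {v}) * ?c u" by simp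
  also have "card (A - {v}) = card A - 1" using A(2) finA by simp
  finally show ?thesis using count_total[OF parts A(1,2) finV] by (simp add: mult.commute)
qed



lemma part_sum_bound:
  assumes graph: "simple_graph_no_isolated E V" and parts: "is_partition V Parts"
    and A: "A \<in> Parts" "v \<in> A" and r2: "r \<ge> 2" and cA: "card A \<ge> 2"
  shows "real (\<Sum>P\<in>restricted_partitions V Parts r n. card (blk P v \<inter> nbrs E V v))
     \<le> real (deg E V v) * (real (card (restricted_partitions V Parts r n)) * (real r - 1) / (real (card A) - 1))"
proof -
  let ?RP = "restricted_partitions V Parts r n"
  let ?N = "nbrs E V v"
  define c where "c = real (card ?RP) * (real r - 1) / (real (card A) - 1)"
  have AV: "A \<subseteq> V" using parts A unfolding is_partition_def by auto
  have vV: "v \<in> V" using AV A by auto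
  have finV: "finite V" using graph_facts[OF graph vV] by blast
  have finRP: "finite ?RP" by (rule RP_finite[OF finV])
  have finN: "finite ?N" using finV unfolding nbrs_def by simp
  have vN: "v \<notin> ?N" using graph_facts[OF graph vV] by blast
  have "(\<Sum>P\<in>?RP. card (blk P v \<inter> ?N)) = (\<Sum>P\<in>?RP. \<Sum>u\<in>?N. if u \<in> blk P v then 1 else 0)"
  proof (rule sum.cong[OF refl])
    fix P assume "P \<in> ?RP"
    have "card (blk P v \<inter> ?N) = card {u\<in>?N. u \<in> blk P v}" by (rule arg_cong[of _ _ card]) auto
    also have "\<dots> = (\<Sum>u\<in>?N. if u \<in> blk P v then 1 else 0)" by (rule card_filter_sum[OF finN])
    finally show "card (blk P v \<inter> ?N) = (\<Sum>u\<in>?N. if u \<in> blk P v then 1 else 0)" .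
  qed
  also have "\<dots> = (\<Sum>u\<in>?N. \<Sum>P\<in>?RP. if u \<in> blk P v then 1 else 0)" by (rule sum.swap)
  also have "\<dots> = (\<Sum>u\<in>?N. card {P\<in>?RP. u \<in> blk P v})"
    by (rule sum.cong[OF refl]) (rule card_filter_sum[OF finRP, symmetric])
  finally have e: "real (\<Sum>P\<in>?RP. card (blk P v \<inter> ?N)) = (\<Sum>u\<in>?N. real (card {P\<in>?RP. u \<in> blk P v}))"
    by simp
  have cA': "real (card A) - 1 > 0" using cA by simp
  have "(\<Sum>u\<in>?N. real (card {P\<in>?RP. u \<in> blk P v})) \<le> (\<Sum>u\<in>?N. c)"
  proof (rule sum_mono)
    fix u assume u: "u \<in> ?N"
    show "real (card {P\<in>?RP. u \<in> blk P v}) \<le> c"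
    proof (cases "u \<in> A")
      case True
      have "u \<noteq> v" using u vN by auto
      have "card {P\<in>?RP. u \<in> blk P v} * (card A - 1) = card ?RP * (r - 1)"
        by (rule count_each[OF parts A True \<open>u \<noteq> v\<close> finV])
      hence "real (card {P\<in>?RP. u \<in> blk P v} * (card A - 1)) = real (card ?RP * (r - 1))" by simp
      hence "real (card {P\<in>?RP. u \<in> blk P v}) * (real (card A) - 1) = real (card ?RP) * (real r - 1)"
        using cA r2 by (simp add: of_nat_diff)
      moreover have "\<And>x y D::real. D > 0 \<Longrightarrow> x * D = y \<Longrightarrow> x \<le> y / D" by (simp add: le_divide_eq)
      ultimately show ?thesis unfolding c_def using cA' by blast
    next
      case False
      have "{P\<in>?RP. u \<in> blk P v} = {}" using blk_in_part(1)[OF parts A] False by blast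
      moreover have "c \<ge> 0" unfolding c_def using cA' r2 by simp
      ultimately show ?thesis by (simp only: card.empty of_nat_0)
    qed
  qed
  also have "\<dots> = real (deg E V v) * c" unfolding deg_def by simp
  finally show ?thesis using e unfolding c_def by simp
qed



lemma sum_inv_parts:
  assumes parts: "is_partition V Parts" and finV: "finite V"
    and cA: "\<forall>A\<in>Parts. card A \<ge> 2"
    and Av: "\<forall>v\<in>V. Av v \<in> Parts \<and> v \<in> Av v"
  shows "(\<Sum>v\<in>V. 1 / (real (card (Av v)) - 1)) \<le> 2 * real (card Parts)"
proof -
  have U: "\<Union>Parts = V" and dj: "disjoint Parts" using parts unfolding is_partition_def by auto
  have PV: "Parts \<subseteq> Pow V" using U by auto
  have finP: "finite Parts" using finite_subset[OF PV] finV by simp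
  have finA: "\<forall>A\<in>Parts. finite A"
  proof
    fix A assume "A \<in> Parts" hence "A \<subseteq> V" using U by auto
    thus "finite A" using finV by (rule finite_subset)
  qed
  have dj2: "\<forall>A\<in>Parts. \<forall>B\<in>Parts. A \<noteq> B \<longrightarrow> A \<inter> B = {}" using dj disjointD by blast
  have "(\<Sum>v\<in>V. 1 / (real (card (Av v)) - 1)) = (\<Sum>v\<in>\<Union>Parts. 1 / (real (card (Av v)) - 1))"
    using U by simp
  also have "\<dots> = (\<Sum>A\<in>Parts. \<Sum>v\<in>A. 1 / (real (card (Av v)) - 1))"
    using sum.Union_disjoint[OF finA dj2] by simp
  also have "\<dots> = (\<Sum>A\<in>Parts. \<Sum>v\<in>A. 1 / (real (card A) - 1))"
  proof (rule sum.cong[OF refl], rule sum.cong[OF refl])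
    fix A v assume A: "A \<in> Parts" and v: "v \<in> A"
    have vV: "v \<in> V" using A v U by auto
    have "Av v = A"
    proof (rule ccontr)
      assume "Av v \<noteq> A"
      hence "Av v \<inter> A = {}" using dj2 Av vV A by blast
      thus False using Av vV v by auto
    qed
    thus "1 / (real (card (Av v)) - 1) = 1 / (real (card A) - 1)" by simp
  qed
  also have "\<dots> \<le> (\<Sum>A\<in>Parts. 2)"
  proof (rule sum_mono)
    fix A assume A: "A \<in> Parts"
    have c2: "real (card A) \<ge> 2" using cA A by auto
    have "(\<Sum>v\<in>A. 1 / (real (card A) - 1)) = real (card A) / (real (card A) - 1)" by simp
    also have "\<dots> \<le> 2" using c2 by (simp add: divide_le_eq)
    finally show "(\<Sum>v\<in>A. 1 / (real (card A) - 1)) \<le> 2" .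
  qed
  also have "\<dots> = 2 * real (card Parts)" by simp
  finally show ?thesis .
qed

theorem mainTheorem16:
  fixes E :: "'a \<Rightarrow> 'a \<Rightarrow> bool" and V :: "'a set" and f :: "'a \<Rightarrow> 'a set \<Rightarrow> real"
    and K :: "'a \<Rightarrow> real" and n p q r :: nat and Parts :: "'a set set"
  assumes "n > 0" "p > 0" "q > 0" "r = p + q"
    and "simple_graph_no_isolated E V"
    and "card V = r * n"
    and "\<forall>v\<in>V. f v {} = 0"
    and "\<forall>v\<in>V. lipschitz_vertex E V f K v"
    and "is_partition V Parts" "\<forall>A\<in>Parts. r dvd card A"
  shows "(\<Sum>P\<in>restricted_partitions V Parts r n. \<bar>cond_exp_B E V f p q n P\<bar>)
            / real (card (restricted_partitions V Parts r n))
         \<le> 2 * Max (K ` V) * real (card Parts) / (real r * real n)"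
proof -
  note n = assms(1) and pq = assms(2,3) and rdef = assms(4) and graph = assms(5) and cV = assms(6)
    and lips = assms(8) and parts = assms(9) and dvd = assms(10)
  let ?RP = "restricted_partitions V Parts r n"
  define Km where "Km = Max (K ` V)"
  have r2: "r \<ge> 2" using rdef pq by simp
  have Vne: "V \<noteq> {}" and finV: "finite V"
    using cV n r2 by (auto intro: card_ge_0_finite simp: card_gt_0_iff[symmetric])
  have KleKm: "v \<in> V \<Longrightarrow> K v \<le> Km" for v unfolding Km_def using finV by simp
  have Kpos: "v \<in> V \<Longrightarrow> K v > 0" for v using lips unfolding lipschitz_vertex_def by auto
  have Km0: "Km > 0" using Vne KleKm Kpos by (meson ex_in_conv less_le_trans)
  have U: "\<Union>Parts = V" using parts unfolding is_partition_def by auto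
  have cA: "\<forall>A\<in>Parts. card A \<ge> 2"
  proof
    fix A assume A: "A \<in> Parts"
    have "A \<noteq> {}" using A parts unfolding is_partition_def by auto
    moreover have "finite A" using A U finV finite_subset by (metis Union_upper)
    ultimately have "card A > 0" by (simp add: card_gt_0_iff)
    hence "r \<le> card A" using dvd A by (simp add: dvd_imp_le)
    thus "card A \<ge> 2" using r2 by simp
  qed
  define Av where "Av v = (SOME A. A \<in> Parts \<and> v \<in> A)" for v
  have Av: "\<forall>v\<in>V. Av v \<in> Parts \<and> v \<in> Av v"
  proof
    fix v assume "v \<in> V"
    hence "\<exists>A. A \<in> Parts \<and> v \<in> A" using U by auto
    thus "Av v \<in> Parts \<and> v \<in> Av v" unfolding Av_def by (rule someI_ex)
  qed
  define a where "a v = real (card (Av v)) - 1" for v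
  have apos: "v \<in> V \<Longrightarrow> a v \<ge> 1" for v unfolding a_def using cA Av by force
  define D where "D = real n * (real r * real (r - 1))"
  have Dpos: "D > 0" unfolding D_def using n r2 by simp
  define cR where "cR = real (card ?RP)"
  have RHSnn: "2 * Km * real (card Parts) / (real r * real n) \<ge> 0" using Km0 by simp
  show ?thesis
  proof (cases "card ?RP = 0")
    case True
    thus ?thesis using RHSnn unfolding Km_def by simp
  next
    case False
    have finRP: "finite ?RP" by (rule RP_finite[OF finV])
    define X where "X P v = real (card (blk P v \<inter> nbrs E V v))" for P v
    define d where "d v = real (deg E V v)" for v
    have dpos: "v \<in> V \<Longrightarrow> d v > 0" for v unfolding d_def using graph_facts[OF graph] by simp
    have bP: "\<bar>cond_exp_B E V f p q n P\<bar> \<le> (\<Sum>v\<in>V. K v / d v * X P v) / D" if P: "P \<in> ?RP" for P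
    proof -
      have "is_partition V P" "\<forall>S\<in>P. card S = p + q"
        using P rdef unfolding restricted_partitions_def by auto
      from per_P[OF graph lips this pq n]
      show ?thesis unfolding D_def X_def d_def rdef by simp
    qed
    have "(\<Sum>P\<in>?RP. \<bar>cond_exp_B E V f p q n P\<bar>) \<le> (\<Sum>P\<in>?RP. (\<Sum>v\<in>V. K v / d v * X P v) / D)"
      by (rule sum_mono) (rule bP)
    also have "\<dots> = (\<Sum>v\<in>V. K v / d v * (\<Sum>P\<in>?RP. X P v)) / D"
      by (simp only: sum_divide_distrib[symmetric] sum_distrib_left sum.swap[of _ ?RP V])
    also have "\<dots> \<le> (\<Sum>v\<in>V. K v / d v * (d v * (cR * (real r - 1) / a v))) / D"
    proof (rule divide_right_mono[OF sum_mono], rule mult_left_mono)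
      fix v assume v: "v \<in> V"
      have "real (\<Sum>P\<in>?RP. card (blk P v \<inter> nbrs E V v))
          \<le> real (deg E V v) * (real (card ?RP) * (real r - 1) / (real (card (Av v)) - 1))"
        by (rule part_sum_bound[OF graph parts _ _ r2]) (use Av v cA in auto)
      thus "(\<Sum>P\<in>?RP. X P v) \<le> d v * (cR * (real r - 1) / a v)"
        unfolding X_def d_def cR_def a_def by simp
      show "0 \<le> K v / d v" using Kpos[OF v] dpos[OF v] by simp
    qed (use Dpos in simp)
    also have "\<dots> = (\<Sum>v\<in>V. K v * (cR * (real r - 1) / a v)) / D"
      by (rule arg_cong[where f="\<lambda>x. x / D"], rule sum.cong[OF refl]) (use dpos in \<open>simp add: less_imp_neq[symmetric]\<close>)
    also have "\<dots> \<le> (\<Sum>v\<in>V. Km * (cR * (real r - 1) / a v)) / D"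
    proof (rule divide_right_mono[OF sum_mono], rule mult_right_mono)
      fix v assume v: "v \<in> V"
      show "K v \<le> Km" using KleKm[OF v] .
      show "0 \<le> cR * (real r - 1) / a v" using apos[OF v] r2 unfolding cR_def by simp
    qed (use Dpos in simp)
    also have "\<dots> = Km * cR * (real r - 1) / D * (\<Sum>v\<in>V. 1 / a v)"
      by (simp add: sum_distrib_left sum_divide_distrib mult_ac)
    also have "\<dots> \<le> Km * cR * (real r - 1) / D * (2 * real (card Parts))"
    proof (rule mult_left_mono)
      show "(\<Sum>v\<in>V. 1 / a v) \<le> 2 * real (card Parts)"
        unfolding a_def by (rule sum_inv_parts[OF parts finV cA Av])
      show "0 \<le> Km * cR * (real r - 1) / D" using Km0 Dpos r2 unfolding cR_def by simp
    qed
    also have "\<dots> = cR * (2 * Km * real (card Parts) / (real r * real n))"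
      unfolding D_def using r2 n by (simp add: of_nat_diff field_simps)
    finally have main: "(\<Sum>P\<in>?RP. \<bar>cond_exp_B E V f p q n P\<bar>) \<le> cR * (2 * Km * real (card Parts) / (real r * real n))" .
    have cRpos: "cR > 0" unfolding cR_def using False by simp
    have "(\<Sum>P\<in>?RP. \<bar>cond_exp_B E V f p q n P\<bar>) / cR \<le> cR * (2 * Km * real (card Parts) / (real r * real n)) / cR"
      by (rule divide_right_mono[OF main]) (use cRpos in simp)
    also have "\<dots> = 2 * Km * real (card Parts) / (real r * real n)" using cRpos by simp
    finally show ?thesis unfolding cR_def Km_def .
  qed
qed

end
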